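(* Let $p>3$ be prime, $0\le m\le p-1$ and $1\le \ell\le p-1$. Then $$\mathcal{K}^{(C)}_{p,m}(\zeta_p^{\ell},z)=(1-\zeta_p^{\ell})\,\Big(\frac{\eta(p^2z)}{\eta(z)}\,\mathcal{F}_1(\ell;z)\Big)\Big|U_{p,m},$$ where $U_{p,m}$ is taken in weight $1$.
   Context: $z$ in the upper half-plane, $q=e^{2\pi i z}$, $q^r=e^{2\pi i r z}$, $\zeta_p=e^{2\pi i/p}$, $(a;q)_\infty=\prod_{k\ge0}(1-aq^k)$, $\eta(z)=q^{1/24}\prod_{n\ge1}(1-q^n)$. $E_{0,\ell}(z)=q^{1/12}\prod_{m\ge1}(1-\zeta_p^{\ell}q^{m-1})(1-\zeta_p^{-\ell}q^{m})$ and $\mathcal{F}_1(\ell;z)=\eta(z)^2/E_{0,\ell}(z)$. Crank generating function: $C(x,q)=\frac{(q;q)_\infty}{(xq;q)_\infty(x^{-1}q;q)_\infty}$; write $C(\zeta_p^\ell,q)=\sum_{n\ge0}c_\ell(n)q^n$ and set $c_\ell(n)=0$ for $n<0$ (equivalently $c_\ell(n)=\sum_{k=0}^{p-1}M(k,p,n)\zeta_p^{k\ell}$, where $M(k,p,n)$ is the number of partitions of $n$ with crank $\equiv k\pmod p$, with the usual convention at $n=1$ dictated by the generating function). Let $s_p=\frac{p^2-1}{24}$ and for an integer $m$ define $\mathcal{K}^{(C)}_{p,m}(\zeta_p^{\ell},z)=q^{m/p}\prod_{n\ge1}(1-q^{pn})\sum_{n\in\mathbb{Z}}c_\ell(pn+m-s_p)\,q^n$.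 For a function $F(z)=\sum_n a(n)q^n$ (exponents in $\tfrac1N\mathbb{Z}$ allowed, $a(n)=0$ for non-integral $n$ below), the operator $U_{p,m}$ in weight $k$ is $F|U_{p,m}=\frac1p\sum_{r=0}^{p-1}e^{-2\pi i rm/p}F\big(\tfrac{z+r}{p}\big)$; on integral-exponent expansions it gives $F|U_{p,m}=q^{m/p}\sum_n a(pn+m)q^n$. *)

theory Defs
  imports "HOL-Analysis.Analysis"
begin

definition qpow :: "real \<Rightarrow> complex \<Rightarrow> complex" where
  "qpow r z = exp (2 * pi * \<i> * of_real r * z)"

definition qq :: "complex \<Rightarrow> complex" where
  "qq z = exp (2 * pi * \<i> * z)"

definition zeta :: "nat \<Rightarrow> complex" where
  "zeta p = exp (2 * pi * \<i> / of_nat p)"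

definition qpoch :: "complex \<Rightarrow> complex \<Rightarrow> complex" where
  "qpoch a q = (\<Prod>k. (1 - a * q ^ k))"

definition eta :: "complex \<Rightarrow> complex" where
  "eta z = qpow (1/24) z * (\<Prod>n. (1 - qq z ^ (n + 1)))"

definition E0 :: "nat \<Rightarrow> nat \<Rightarrow> complex \<Rightarrow> complex" where
  "E0 p l z = qpow (1/12) z *
     (\<Prod>m. (1 - zeta p ^ l * qq z ^ m) * (1 - inverse (zeta p ^ l) * qq z ^ (m + 1)))"

definition F1 :: "nat \<Rightarrow> nat \<Rightarrow> complex \<Rightarrow> complex" where
  "F1 p l z = eta z ^ 2 / E0 p l z"

definition crank_gf :: "complex \<Rightarrow> complex \<Rightarrow> complex" where
  "crank_gf x q = qpoch q q / (qpoch (x * q) q * qpoch (inverse x * q) q)"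

definition crank_coeff :: "nat \<Rightarrow> nat \<Rightarrow> int \<Rightarrow> complex" where
  "crank_coeff p l n =
     (if n < 0 then 0
      else (deriv ^^ nat n) (\<lambda>q. crank_gf (zeta p ^ l) q) 0 / of_nat (fact (nat n)))"

definition s_p :: "nat \<Rightarrow> int" where
  "s_p p = (int p ^ 2 - 1) div 24"

definition KC :: "nat \<Rightarrow> nat \<Rightarrow> nat \<Rightarrow> complex \<Rightarrow> complex" where
  "KC p m l z = qpow (real m / real p) z * (\<Prod>n. (1 - qq z ^ (p * (n + 1)))) *
     infsum (\<lambda>n::int. crank_coeff p l (int p * n + int m - s_p p) * qpow (real_of_int n) z) UNIV"

definition Uop :: "nat \<Rightarrow> nat \<Rightarrow> (complex \<Rightarrow> complex) \<Rightarrow> complex \<Rightarrow> complex" where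
  "Uop p m F z = (1 / of_nat p) *
     (\<Sum>r<p. exp (- 2 * pi * \<i> * of_nat r * of_nat m / of_nat p) * F ((z + of_nat r) / of_nat p))"

end

theory Submission
  imports Defs "HOL-Complex_Analysis.Complex_Analysis"
begin


lemma prime_not_dvd_small:
  fixes p d :: nat assumes "prime p" "d dvd p" "1 < d" "d < p"
  shows False
  using assms prime_nat_iff by (metis less_not_refl)

lemma r24: "r < (24::nat) \<Longrightarrow> r mod 2 = 1 \<Longrightarrow> r mod 3 \<noteq> 0 \<Longrightarrow> r^2 mod 24 = 1"
proof -
  assume a: "r < 24" "r mod 2 = 1" "r mod 3 \<noteq> 0"
  have "r = 1 \<or> r = 5 \<or> r = 7 \<or> r = 11 \<or> r = 13 \<or> r = 17 \<or> r = 19 \<or> r = 23"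
    using a by presburger
  thus ?thesis by (elim disjE) simp_all
qed

lemma p2_mod24:
  fixes p :: nat assumes "prime p" "p > 3"
  shows "p^2 mod 24 = 1"
proof -
  have n2: "\<not> 2 dvd p"
  proof
    assume h: "2 dvd p"
    show False by (rule prime_not_dvd_small[OF assms(1) h]) (use assms(2) in simp_all)
  qed
  have n3: "\<not> 3 dvd p"
  proof
    assume h: "3 dvd p"
    show False by (rule prime_not_dvd_small[OF assms(1) h]) (use assms(2) in simp_all)
  qed
  define r where "r = p mod 24"
  have r1: "r < 24" unfolding r_def by simp
  have r2: "r mod 2 = 1" unfolding r_def using n2 by (simp add: mod_mod_cancel odd_iff_mod_2_eq_one)
  have r3: "r mod 3 \<noteq> 0" unfolding r_def using n3 by (simp add: mod_mod_cancel dvd_eq_mod_eq_0)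
  have "p^2 mod 24 = r^2 mod 24" unfolding r_def by (simp add: power_mod)
  also have "\<dots> = 1" by (rule r24[OF r1 r2 r3])
  finally show ?thesis .
qed

lemma zeta_pow_eq: "zeta p ^ N = exp (2 * of_real pi * \<i> * of_nat N / of_nat p)"
proof -
  have "zeta p ^ N = exp (of_nat N * (2 * pi * \<i> / of_nat p))"
    unfolding zeta_def by (rule exp_of_nat_mult[symmetric])
  also have "of_nat N * (2 * pi * \<i> / of_nat p) = 2 * of_real pi * \<i> * of_nat N / of_nat p"
    by simp
  finally show ?thesis .
qed

lemma zeta_pow_1_iff: "p > 0 \<Longrightarrow> zeta p ^ N = 1 \<longleftrightarrow> p dvd N"
  unfolding zeta_pow_eq by (rule complex_root_unity_eq_1) simp

lemma zeta_pow_p: "p > 0 \<Longrightarrow> zeta p ^ p = 1"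
  by (simp add: zeta_pow_1_iff)

lemma root_sum:
  fixes p N :: nat assumes "p > 0"
  shows "(\<Sum>r<p. (zeta p ^ N) ^ r) = (if p dvd N then of_nat p else 0)"
proof (cases "p dvd N")
  case True
  then have "zeta p ^ N = 1" using zeta_pow_1_iff[OF assms] by simp
  then show ?thesis using True by simp
next
  case False
  then have u1: "zeta p ^ N \<noteq> 1" using zeta_pow_1_iff[OF assms] by simp
  have up: "(zeta p ^ N) ^ p = 1"
    by (metis power_mult mult.commute power_one zeta_pow_p[OF assms])
  have "(\<Sum>r<p. (zeta p ^ N) ^ r) = ((zeta p ^ N) ^ p - 1) / (zeta p ^ N - 1)"
    by (rule geometric_sum[OF u1])
  also have "\<dots> = 0" using up by simp
  finally show ?thesis using False by simp
qed



lemma qfac_summable: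
  fixes c x :: complex assumes "norm x < 1"
  shows "summable (\<lambda>k. norm ((1 - c * x * x ^ k) - 1))"
proof -
  have "summable (\<lambda>k. norm c * norm x * norm x ^ k)"
    by (intro summable_mult summable_geometric) (use assms in auto)
  moreover have "(\<lambda>k. norm ((1 - c * x * x ^ k) - 1)) = (\<lambda>k. norm c * norm x * norm x ^ k)"
    by (simp add: norm_mult norm_power)
  ultimately show ?thesis by simp
qed

lemma qfac_conv:
  fixes c x :: complex assumes "norm x < 1"
  shows "convergent_prod (\<lambda>k. 1 - c * x * x ^ k)"
  by (rule abs_convergent_prod_imp_convergent_prod[OF summable_imp_abs_convergent_prod[OF qfac_summable[OF assms]]])

lemma qfac_nz:
  fixes c x :: complex assumes "norm x < 1" "norm c \<le> 1"
  shows "1 - c * x * x ^ k \<noteq> 0"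
proof
  assume "1 - c * x * x ^ k = 0"
  hence "c * x * x ^ k = 1" by simp
  hence e: "norm (c * x * x ^ k) = 1" by simp
  have p1: "norm x ^ k \<le> 1" by (rule power_le_one) (use assms(1) in auto)
  have p2: "norm c * norm x \<le> norm x"
    using mult_right_mono[OF assms(2) norm_ge_zero[of x]] by simp
  have p3: "norm c * norm x * norm x ^ k \<le> norm c * norm x * 1"
    by (rule mult_left_mono[OF p1]) simp
  have "norm (c * x * x ^ k) = norm c * norm x * norm x ^ k" by (simp add: norm_mult norm_power)
  with e p2 p3 assms(1) show False by linarith
qed

lemma qpoch_nz:
  fixes c x :: complex assumes "norm x < 1" "norm c \<le> 1"
  shows "qpoch (c * x) x \<noteq> 0"
  unfolding qpoch_def
  by (intro prodinf_nonzero qfac_conv qfac_nz assms)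

lemma qpoch_holo:
  fixes c :: complex
  shows "(\<lambda>q. qpoch (c * q) q) holomorphic_on ball 0 1"
proof (rule holomorphic_uniform_sequence)
  define P where "P = (\<lambda>N q. \<Prod>k<N. (1 - c * q * q ^ k))"
  show "open (ball (0::complex) 1)" by simp
  show "\<And>n. (\<lambda>q. \<Prod>k<n. (1 - c * q * q ^ k)) holomorphic_on ball 0 1"
    by (intro holomorphic_intros)
  fix x0 :: complex assume x0: "x0 \<in> ball 0 1"
  define d where "d = (1 - norm x0) / 2"
  define R where "R = (1 + norm x0) / 2"
  have d: "d > 0" using x0 by (simp add: d_def)
  have R: "R < 1" "R \<ge> 0" using x0 by (auto simp: R_def)
  have normq: "norm q \<le> R" if "q \<in> cball x0 d" for q
  proof -
    have a: "norm q \<le> norm x0 + norm (q - x0)" by (metis add.commute diff_add_cancel norm_triangle_ineq)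
    have b: "norm (q - x0) \<le> d" using that by (simp add: dist_norm norm_minus_commute)
    have c: "norm q \<le> norm x0 + d" using a b by linarith
    show ?thesis using c by (simp add: d_def R_def field_simps)
  qed
  have sub: "cball x0 d \<subseteq> ball 0 1"
  proof
    fix q assume q: "q \<in> cball x0 d"
    have "norm q < 1" using normq[OF q] R(1) by linarith
    thus "q \<in> ball 0 1" by simp
  qed
  have uc: "uniformly_convergent_on (cball x0 d) (\<lambda>N q. \<Prod>k<N. (1 - c * q * q ^ k))"
  proof (rule uniformly_convergent_on_prod')
    show "uniformly_convergent_on (cball x0 d) (\<lambda>N q. \<Sum>n<N. norm ((1 - c * q * q ^ n) - 1))"
    proof (rule Weierstrass_m_test')
      fix n q assume q: "q \<in> cball x0 d"
      have "norm (norm ((1 - c * q * q ^ n) - 1)) = norm c * (norm q * norm q ^ n)"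
        by (simp add: norm_mult norm_power)
      also have "\<dots> \<le> norm c * (R * R ^ n)"
      proof -
        have nq: "norm q \<le> R" by (rule normq[OF q])
        have "norm q ^ n \<le> R ^ n" by (rule power_mono[OF nq norm_ge_zero])
        hence "norm q * norm q ^ n \<le> R * R ^ n"
          by (rule mult_mono[OF nq _ R(2) zero_le_power[OF norm_ge_zero]])
        thus ?thesis by (rule mult_left_mono) simp
      qed
      finally show "norm (norm ((1 - c * q * q ^ n) - 1)) \<le> norm c * (R * R ^ n)" .
    next
      show "summable (\<lambda>n. norm c * (R * R ^ n))"
        by (intro summable_mult summable_geometric) (use R in auto)
    qed
  next
    fix n show "continuous_on (cball x0 d) (\<lambda>q. 1 - c * q * q ^ n)" by (intro continuous_intros)
  next
    show "compact (cball x0 d)" by (rule compact_cball)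
  qed
  then obtain g where g: "uniform_limit (cball x0 d) (\<lambda>N q. \<Prod>k<N. (1 - c * q * q ^ k)) g sequentially"
    unfolding uniformly_convergent_on_def by blast
  also have "?this \<longleftrightarrow> uniform_limit (cball x0 d) (\<lambda>N q. \<Prod>k<N. (1 - c * q * q ^ k)) (\<lambda>q. qpoch (c * q) q) sequentially"
  proof (intro uniform_limit_cong)
    fix q :: complex assume q: "q \<in> cball x0 d"
    have "(\<lambda>n. \<Prod>k<n. (1 - c * q * q ^ k)) \<longlonglongrightarrow> g q"
      by (rule tendsto_uniform_limitI[OF g q])
    hence "(\<lambda>n. \<Prod>k<Suc n. (1 - c * q * q ^ k)) \<longlonglongrightarrow> g q"
      by (rule LIMSEQ_Suc)
    moreover have "(\<lambda>n. \<Prod>k<Suc n. (1 - c * q * q ^ k)) \<longlonglongrightarrow> qpoch (c * q) q"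
    proof -
      have "norm q < 1" using normq[OF q] R(1) by linarith
      from convergent_prod_LIMSEQ[OF qfac_conv[OF this, of c]] show ?thesis
      unfolding lessThan_Suc_atMost qpoch_def by (simp add: mult.assoc)
    qed
    ultimately show "g q = qpoch (c * q) q"
      by (rule LIMSEQ_unique)
  qed (rule always_eventually, simp)
  finally have ul: "uniform_limit (cball x0 d) (\<lambda>N q. \<Prod>k<N. (1 - c * q * q ^ k)) (\<lambda>q. qpoch (c * q) q) sequentially" .
  thus "\<exists>d>0. cball x0 d \<subseteq> ball 0 1 \<and> uniform_limit (cball x0 d) (\<lambda>N q. \<Prod>k<N. (1 - c * q * q ^ k)) (\<lambda>q. qpoch (c * q) q) sequentially"
    by (intro exI[of _ d] conjI d sub ul)
qed



lemma crank_holo: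
  fixes x :: complex assumes x: "norm x = 1"
  shows "crank_gf x holomorphic_on ball 0 1"
proof -
  have h1: "(\<lambda>q. qpoch (1 * q) q) holomorphic_on ball 0 1" by (rule qpoch_holo)
  have h1': "(\<lambda>q. qpoch q q) holomorphic_on ball 0 1" using h1 by simp
  have h2: "(\<lambda>q. qpoch (x * q) q) holomorphic_on ball 0 1" by (rule qpoch_holo)
  have h3: "(\<lambda>q. qpoch (inverse x * q) q) holomorphic_on ball 0 1" by (rule qpoch_holo)
  have h23: "(\<lambda>q. qpoch (x * q) q * qpoch (inverse x * q) q) holomorphic_on ball 0 1"
    by (rule holomorphic_on_mult[OF h2 h3])
  have nz: "qpoch (x * q) q * qpoch (inverse x * q) q \<noteq> 0" if "q \<in> ball 0 1" for q
  proof -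
    have q: "norm q < 1" using that by simp
    have "norm (inverse x) \<le> 1" using x by (simp add: norm_inverse)
    hence "qpoch (inverse x * q) q \<noteq> 0" by (rule qpoch_nz[OF q])
    moreover have "qpoch (x * q) q \<noteq> 0" by (rule qpoch_nz[OF q]) (use x in simp)
    ultimately show ?thesis by simp
  qed
  have "(\<lambda>q. qpoch q q / (qpoch (x * q) q * qpoch (inverse x * q) q)) holomorphic_on ball 0 1"
    by (rule holomorphic_on_divide[OF h1' h23 nz])
  moreover have "crank_gf x = (\<lambda>q. qpoch q q / (qpoch (x * q) q * qpoch (inverse x * q) q))"
    by (rule ext) (simp only: crank_gf_def)
  ultimately show ?thesis by simp
qed

definition ccoef :: "complex \<Rightarrow> nat \<Rightarrow> complex" where
  "ccoef x n = (deriv ^^ n) (crank_gf x) 0 / fact n"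

lemma crank_sums:
  fixes x w :: complex assumes x: "norm x = 1" and w: "norm w < 1"
  shows "(\<lambda>n. ccoef x n * w ^ n) sums crank_gf x w"
proof -
  have "w \<in> ball 0 1" using w by simp
  from holomorphic_power_series[OF crank_holo[OF x] this]
  show ?thesis by (simp add: ccoef_def)
qed

lemma crank_abs_summable:
  fixes x t :: complex assumes x: "norm x = 1" and t: "norm t < 1"
  shows "summable (\<lambda>n. norm (ccoef x n * t ^ n))"
proof -
  define r :: real where "r = (1 + norm t) / 2"
  have r1: "r < 1" "norm t < r" using t by (auto simp: r_def)
  have r0: "r \<ge> 0" using norm_ge_zero[of t] by (simp add: r_def)
  have nr: "norm (complex_of_real r) < 1" using r1 r0 by simp
  have "summable (\<lambda>n. ccoef x n * (complex_of_real r) ^ n)"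
    using crank_sums[OF x nr] by (rule sums_summable)
  hence cr: "conv_radius (ccoef x) \<ge> norm (complex_of_real r)" by (rule conv_radius_geI)
  have "norm (complex_of_real r) = r" using r0 by simp
  with cr have cr': "ereal r \<le> conv_radius (ccoef x)" by simp
  have "ereal (norm t) < ereal r" using r1 by simp
  hence "ereal (norm t) < conv_radius (ccoef x)" using cr' by (rule order.strict_trans2)
  thus ?thesis by (rule abs_summable_in_conv_radius)
qed



lemma qq_norm: "Im w > 0 \<Longrightarrow> norm (qq w) < 1"
proof -
  assume "Im w > 0"
  have "norm (qq w) = exp (Re (2 * pi * \<i> * w))" unfolding qq_def by (rule norm_exp_eq_Re)
  also have "Re (2 * pi * \<i> * w) = - (2 * pi * Im w)" by simp
  also have "exp (- (2 * pi * Im w)) < 1" using \<open>Im w > 0\<close> pi_gt_zero by simp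
  finally show ?thesis .
qed

lemma qq_mult_nat: "qq (of_nat N * w) = qq w ^ N"
proof -
  have "qq (of_nat N * w) = exp (of_nat N * (2 * pi * \<i> * w))"
    unfolding qq_def by (simp add: mult_ac)
  also have "\<dots> = qq w ^ N" unfolding qq_def by (rule exp_of_nat_mult)
  finally show ?thesis .
qed

lemma eta_eq: "eta w = qpow (1/24) w * qpoch (1 * qq w) (qq w)"
  unfolding eta_def qpoch_def
  by (simp add: power_Suc)

lemma prod_split_head_q:
  fixes c x :: complex assumes x: "norm x < 1" and c: "c \<noteq> 1"
  shows "(\<Prod>m. 1 - c * x ^ m) = (1 - c) * qpoch (c * x) x"
proof -
  define f where "f = (\<lambda>m::nat. 1 - c * x ^ m)"
  have fs: "(\<lambda>n. f (Suc n)) = (\<lambda>k. 1 - c * x * x ^ k)"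
    by (rule ext) (simp add: f_def mult_ac)
  have cs: "convergent_prod (\<lambda>n. f (Suc n))" unfolding fs by (rule qfac_conv[OF x])
  hence cf: "convergent_prod f" by simp
  have f0: "f 0 \<noteq> 0" using c by (simp add: f_def)
  have "(\<Prod>n. f (Suc n)) = prodinf f / f 0" by (rule prodinf_split_head[OF cf f0])
  hence "prodinf f = f 0 * (\<Prod>n. f (Suc n))" using f0 by (simp add: field_simps)
  also have "(\<Prod>n. f (Suc n)) = qpoch (c * x) x" unfolding fs qpoch_def by (simp add: mult_ac)
  finally show ?thesis by (simp add: f_def)
qed

lemma E0_eq:
  fixes p l :: nat and w :: complex
  defines "x \<equiv> qq w" and "\<zeta> \<equiv> zeta p ^ l"
  assumes x: "norm x < 1" and c: "\<zeta> \<noteq> 1"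
  shows "E0 p l w = qpow (1/12) w * ((1 - \<zeta>) * qpoch (\<zeta> * x) x * qpoch (inverse \<zeta> * x) x)"
proof -
  define f where "f = (\<lambda>m::nat. 1 - \<zeta> * x ^ m)"
  define g where "g = (\<lambda>m::nat. 1 - inverse \<zeta> * x ^ (m + 1))"
  have gs: "g = (\<lambda>k. 1 - inverse \<zeta> * x * x ^ k)"
    by (rule ext) (simp add: g_def mult_ac)
  have cg: "convergent_prod g" unfolding gs by (rule qfac_conv[OF x])
  have fs: "(\<lambda>n. f (Suc n)) = (\<lambda>k. 1 - \<zeta> * x * x ^ k)"
    by (rule ext) (simp add: f_def mult_ac)
  have cs: "convergent_prod (\<lambda>n. f (Suc n))" unfolding fs by (rule qfac_conv[OF x])
  hence cf: "convergent_prod f" by simp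
  have "(\<Prod>m. f m * g m) = prodinf f * prodinf g" by (rule prodinf_mult[OF cf cg, symmetric])
  also have "prodinf f = (1 - \<zeta>) * qpoch (\<zeta> * x) x" unfolding f_def by (rule prod_split_head_q[OF x c])
  also have "prodinf g = qpoch (inverse \<zeta> * x) x" unfolding gs qpoch_def by (simp add: mult_ac)
  finally have "(\<Prod>m. f m * g m) = (1 - \<zeta>) * qpoch (\<zeta> * x) x * qpoch (inverse \<zeta> * x) x" .
  thus ?thesis unfolding E0_def f_def g_def x_def \<zeta>_def by simp
qed

lemma norm_zeta: "norm (zeta p) = 1"
  unfolding zeta_def by (simp add: norm_exp_eq_Re)

lemma qpow_comb:
  fixes p s :: nat and w :: complex
  assumes "p^2 = 24 * s + 1"
  shows "qpow (1/24) (of_nat (p^2) * w) * qpow (1/24) w = qpow (1/12) w * qq w ^ s"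
proof -
  have e: "(of_nat (p^2) :: complex) = 24 * of_nat s + 1"
    using arg_cong[OF assms, of "of_nat :: nat \<Rightarrow> complex"] by simp
  have "qpow (1/24) (of_nat (p^2) * w) * qpow (1/24) w =
        exp (2 * pi * \<i> * of_real (1/24) * (of_nat (p^2) * w) + 2 * pi * \<i> * of_real (1/24) * w)"
    unfolding qpow_def by (rule exp_add[symmetric])
  also have "2 * pi * \<i> * of_real (1/24) * (of_nat (p^2) * w) + 2 * pi * \<i> * of_real (1/24) * w
     = 2 * pi * \<i> * of_real (1/12) * w + of_nat s * (2 * pi * \<i> * w)"
    unfolding e by (simp add: field_simps)
  also have "exp (2 * pi * \<i> * of_real (1/12) * w + of_nat s * (2 * pi * \<i> * w)) =
     qpow (1/12) w * qq w ^ s"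
    unfolding qpow_def qq_def by (simp add: exp_add exp_of_nat_mult)
  finally show ?thesis .
qed

lemma alg_id:
  fixes a b e12 e24 e24p z1 q1 q2 xs B :: complex
  assumes "a \<noteq> 0" "e24 \<noteq> 0" "e12 \<noteq> 0" "z1 \<noteq> 0" "q1 \<noteq> 0" "q2 \<noteq> 0"
    and "e24p * e24 = e12 * xs"
  shows "z1 * ((e24p * B) / (e24 * a) * ((e24 * a)^2 / (e12 * (z1 * q1 * q2)))) = xs * B * (a / (q1 * q2))"
proof -
  have "z1 * ((e24p * B) / (e24 * a) * ((e24 * a)^2 / (e12 * (z1 * q1 * q2)))) =
        (e24p * e24) * B * a / (e12 * q1 * q2)"
    using assms(1-6) by (simp add: field_simps power2_eq_square)
  also have "\<dots> = xs * B * (a / (q1 * q2))" using assms by (simp add: field_simps)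
  finally show ?thesis .
qed

lemma lemA:
  fixes p l s :: nat and w :: complex
  assumes p: "p > 0" and l: "0 < l" "l < p" and w: "Im w > 0" and s: "p^2 = 24 * s + 1"
  shows "(1 - zeta p ^ l) * (eta (of_nat (p^2) * w) / eta w * F1 p l w)
       = qq w ^ s * qpoch (1 * qq w ^ (p^2)) (qq w ^ (p^2)) * crank_gf (zeta p ^ l) (qq w)"
proof -
  define x where "x = qq w"
  define \<zeta> where "\<zeta> = zeta p ^ l"
  have x: "norm x < 1" unfolding x_def by (rule qq_norm[OF w])
  have nz: "norm \<zeta> = 1" unfolding \<zeta>_def by (simp add: norm_power norm_zeta)
  have z1: "\<zeta> \<noteq> 1"
  proof
    assume "\<zeta> = 1"
    hence "p dvd l" unfolding \<zeta>_def using zeta_pow_1_iff[OF p] by simp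
    thus False using l by (simp add: nat_dvd_not_less)
  qed
  have z1': "1 - \<zeta> \<noteq> 0" using z1 by simp
  have nzi: "norm (inverse \<zeta>) \<le> 1" using nz by (simp add: norm_inverse)
  define A where "A = qpoch (1 * x) x"
  define Q1 where "Q1 = qpoch (\<zeta> * x) x"
  define Q2 where "Q2 = qpoch (inverse \<zeta> * x) x"
  have A0: "A \<noteq> 0" unfolding A_def by (rule qpoch_nz[OF x]) simp
  have Q10: "Q1 \<noteq> 0" unfolding Q1_def by (rule qpoch_nz[OF x]) (simp add: nz)
  have Q20: "Q2 \<noteq> 0" unfolding Q2_def by (rule qpoch_nz[OF x nzi])
  have e24: "qpow (1/24) w \<noteq> 0" unfolding qpow_def by simp
  have e12: "qpow (1/12) w \<noteq> 0" unfolding qpow_def by simp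
  have etaw: "eta w = qpow (1/24) w * A" unfolding A_def x_def by (rule eta_eq)
  have etap: "eta (of_nat (p^2) * w) = qpow (1/24) (of_nat (p^2) * w) * qpoch (1 * x ^ (p^2)) (x ^ (p^2))"
    unfolding eta_eq qq_mult_nat x_def ..
  have E0w: "E0 p l w = qpow (1/12) w * ((1 - \<zeta>) * Q1 * Q2)"
    unfolding Q1_def Q2_def \<zeta>_def x_def
    by (rule E0_eq) (use x z1 in \<open>simp_all add: x_def \<zeta>_def\<close>)
  have cg: "crank_gf \<zeta> x = A / (Q1 * Q2)"
    unfolding crank_gf_def A_def Q1_def Q2_def by simp
  have "(1 - \<zeta>) * (eta (of_nat (p^2) * w) / eta w * F1 p l w) =
     (1 - \<zeta>) * ((qpow (1/24) (of_nat (p^2) * w) * qpoch (1 * x ^ (p^2)) (x ^ (p^2))) / (qpow (1/24) w * A)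
       * ((qpow (1/24) w * A)^2 / (qpow (1/12) w * ((1 - \<zeta>) * Q1 * Q2))))"
    unfolding F1_def etap etaw E0w ..
  also have "\<dots> = x ^ s * qpoch (1 * x ^ (p^2)) (x ^ (p^2)) * (A / (Q1 * Q2))"
    by (rule alg_id[OF A0 e24 e12 z1' Q10 Q20]) (unfold x_def, rule qpow_comb[OF s])
  finally show ?thesis unfolding cg[symmetric] x_def \<zeta>_def .
qed



lemma pow_om: "(w::complex)^(r*a) * (w^r)^b * (w^r)^c = (w^(c+b+a))^r"
proof -
  have "(w^r)^b = w^(r*b)" by (simp add: power_mult)
  moreover have "(w^r)^c = w^(r*c)" by (simp add: power_mult)
  moreover have "(w^(c+b+a))^r = w^((c+b+a)*r)" by (simp add: power_mult)
  moreover have "w^(r*a) * w^(r*b) * w^(r*c) = w^(r*a + r*b + r*c)" by (simp add: power_add)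
  moreover have "r*a + r*b + r*c = (c+b+a)*r" by (simp add: algebra_simps)
  ultimately show ?thesis by simp
qed

lemma qq_shift:
  assumes p: "p > 0"
  shows "qq ((z + of_nat r) / of_nat p) = qq (z / of_nat p) * zeta p ^ r"
proof -
  have "2 * pi * \<i> * ((z + of_nat r) / of_nat p) = 2 * pi * \<i> * (z / of_nat p) + of_nat r * (2 * pi * \<i> / of_nat p)"
    using p by (simp add: field_simps)
  hence "qq ((z + of_nat r) / of_nat p) = exp (2 * pi * \<i> * (z / of_nat p)) * exp (of_nat r * (2 * pi * \<i> / of_nat p))"
    unfolding qq_def by (simp add: exp_add)
  also have "\<dots> = qq (z / of_nat p) * zeta p ^ r"
    unfolding qq_def zeta_def by (simp only: exp_of_nat_mult)
  finally show ?thesis .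
qed

lemma Er_eq:
  fixes p m r :: nat
  assumes p: "p > 0" and m: "m \<le> p"
  shows "exp (- 2 * pi * \<i> * of_nat r * of_nat m / of_nat p) = zeta p ^ (r * (p - m))"
proof -
  have "zeta p ^ (r * (p - m)) = exp (of_nat (r * (p - m)) * (2 * pi * \<i> / of_nat p))"
    unfolding zeta_def by (simp only: exp_of_nat_mult)
  also have "of_nat (r * (p - m)) * (2 * pi * \<i> / of_nat p) =
             \<i> * (of_nat r * (of_real pi * 2)) + (- 2 * pi * \<i> * of_nat r * of_nat m / of_nat p)"
    using p m by (simp add: of_nat_diff field_simps)
  also have "exp (\<i> * (of_nat r * (of_real pi * 2)) + (- 2 * pi * \<i> * of_nat r * of_nat m / of_nat p))
             = exp (- 2 * pi * \<i> * of_nat r * of_nat m / of_nat p)"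
    by (simp only: exp_add exp_2pi_1_nat mult_1_left)
  finally show ?thesis ..
qed

lemma norm_t_om: "norm (t * zeta p ^ r) = norm t"
  by (simp add: norm_mult norm_power norm_zeta)

lemma U_sums:
  fixes p m s :: nat and z \<zeta> PP :: complex and F :: "complex \<Rightarrow> complex"
  defines "t \<equiv> qq (z / of_nat p)"
  assumes p: "p > 0" and m: "m \<le> p" and z: "Im z > 0" and nz: "norm \<zeta> = 1"
    and hyp: "\<And>r. r < p \<Longrightarrow> (1 - \<zeta>) * F ((z + of_nat r) / of_nat p) =
              (t * zeta p ^ r) ^ s * PP * crank_gf \<zeta> (t * zeta p ^ r)"
  shows "(\<lambda>n. PP * (ccoef \<zeta> n * t ^ (n + s) * (if p dvd (n + s + (p - m)) then 1 else 0)))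
           sums ((1 - \<zeta>) * Uop p m F z)"
proof -
  define \<omega> where "\<omega> = zeta p"
  have tn: "norm t < 1" unfolding t_def by (rule qq_norm) (use z p in simp)
  define K where "K = (\<lambda>r. (1 / of_nat p * \<omega> ^ (r * (p - m))) * ((t * \<omega> ^ r) ^ s * PP))"
  have U: "(1 - \<zeta>) * Uop p m F z = (\<Sum>r<p. K r * crank_gf \<zeta> (t * \<omega> ^ r))"
  proof -
    have "(1 - \<zeta>) * Uop p m F z =
      (\<Sum>r<p. (1 / of_nat p * exp (- 2 * pi * \<i> * of_nat r * of_nat m / of_nat p)) *
               ((1 - \<zeta>) * F ((z + of_nat r) / of_nat p)))"
      unfolding Uop_def by (simp add: sum_distrib_left mult_ac)
    also have "\<dots> = (\<Sum>r<p. K r * crank_gf \<zeta> (t * \<omega> ^ r))"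
    proof (rule sum.cong[OF refl])
      fix r assume "r \<in> {..<p}"
      hence r: "r < p" by simp
      show "(1 / of_nat p * exp (- 2 * pi * \<i> * of_nat r * of_nat m / of_nat p)) *
               ((1 - \<zeta>) * F ((z + of_nat r) / of_nat p)) = K r * crank_gf \<zeta> (t * \<omega> ^ r)"
        unfolding hyp[OF r] Er_eq[OF p m] K_def \<omega>_def by (simp only: mult_ac)
    qed
    finally show ?thesis .
  qed
  have each: "(\<lambda>n. K r * (ccoef \<zeta> n * (t * \<omega> ^ r) ^ n)) sums (K r * crank_gf \<zeta> (t * \<omega> ^ r))" for r
  proof -
    have "norm (t * \<omega> ^ r) < 1" unfolding \<omega>_def norm_t_om by (rule tn)
    from sums_mult[OF crank_sums[OF nz this], of "K r"] show ?thesis .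
  qed
  have S: "(\<lambda>n. \<Sum>r<p. K r * (ccoef \<zeta> n * (t * \<omega> ^ r) ^ n)) sums (\<Sum>r<p. K r * crank_gf \<zeta> (t * \<omega> ^ r))"
    by (rule sums_sum) (rule each)
  have pt: "(\<Sum>r<p. K r * (ccoef \<zeta> n * (t * \<omega> ^ r) ^ n)) =
        PP * (ccoef \<zeta> n * t ^ (n + s) * (if p dvd (n + s + (p - m)) then 1 else 0))" for n
  proof -
    define N where "N = n + s + (p - m)"
    have "K r * (ccoef \<zeta> n * (t * \<omega> ^ r) ^ n) = (PP * ccoef \<zeta> n * t ^ (n + s) / of_nat p) * (\<omega> ^ N) ^ r" for r
    proof -
      have "K r * (ccoef \<zeta> n * (t * \<omega> ^ r) ^ n) =
          (PP * ccoef \<zeta> n * (t ^ s * t ^ n) / of_nat p) * (\<omega> ^ (r * (p - m)) * (\<omega> ^ r) ^ s * (\<omega> ^ r) ^ n)"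
        unfolding K_def by (simp add: power_mult_distrib field_simps)
      also have "\<omega> ^ (r * (p - m)) * (\<omega> ^ r) ^ s * (\<omega> ^ r) ^ n = (\<omega> ^ N) ^ r"
        unfolding N_def by (rule pow_om)
      also have "t ^ s * t ^ n = t ^ (n + s)" by (simp add: power_add mult.commute)
      finally show ?thesis .
    qed
    hence "(\<Sum>r<p. K r * (ccoef \<zeta> n * (t * \<omega> ^ r) ^ n)) = (PP * ccoef \<zeta> n * t ^ (n + s) / of_nat p) * (\<Sum>r<p. (\<omega> ^ N) ^ r)"
      by (simp add: sum_distrib_left)
    also have "(\<Sum>r<p. (\<omega> ^ N) ^ r) = (if p dvd N then of_nat p else 0)"
      unfolding \<omega>_def by (rule root_sum[OF p])
    finally show ?thesis using p unfolding N_def by simp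
  qed
  show ?thesis using S unfolding pt U[symmetric] .
qed



lemma f_summable:
  fixes p m s :: nat and \<zeta> t :: complex
  assumes nz: "norm \<zeta> = 1" and tn: "norm t < 1"
  shows "summable (\<lambda>n. norm (ccoef \<zeta> n * t ^ (n + s) * (if p dvd (n + s + (p - m)) then 1 else 0)))"
proof (rule summable_comparison_test')
  show "summable (\<lambda>n. norm (ccoef \<zeta> n * t ^ n) * norm t ^ s)"
    by (rule summable_mult2[OF crank_abs_summable[OF nz tn]])
  fix n :: nat
  have "norm (ccoef \<zeta> n * t ^ (n + s)) = norm (ccoef \<zeta> n * t ^ n) * norm t ^ s"
    by (simp add: norm_mult norm_power power_add)
  thus "norm (norm (ccoef \<zeta> n * t ^ (n + s) * (if p dvd (n + s + (p - m)) then 1 else 0)))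
        \<le> norm (ccoef \<zeta> n * t ^ n) * norm t ^ s"
    by (cases "p dvd (n + s + (p - m))") simp_all
qed

lemma crank_coeff_nat: "crank_coeff p l (int n) = ccoef (zeta p ^ l) n"
  unfolding crank_coeff_def ccoef_def by simp

lemma KC_side:
  fixes p m l s :: nat and z :: complex
  defines "t \<equiv> qq (z / of_nat p)" and "\<zeta> \<equiv> zeta p ^ l"
  defines "f \<equiv> (\<lambda>n. ccoef \<zeta> n * t ^ (n + s) * (if p dvd (n + s + (p - m)) then 1 else 0))"
  assumes p: "p > 0" and m: "m < p" and z: "Im z > 0" and sp: "s_p p = int s"
  shows "KC p m l z = qpoch (1 * qq z ^ p) (qq z ^ p) * suminf f"
proof -
  have tn: "norm t < 1" unfolding t_def by (rule qq_norm) (use z p in simp)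
  have nz: "norm \<zeta> = 1" unfolding \<zeta>_def by (simp add: norm_power norm_zeta)
  have t0: "t \<noteq> 0" unfolding t_def qq_def by simp
  have tp: "t ^ p = qq z"
  proof -
    have "qq z = qq (of_nat p * (z / of_nat p))" using p by simp
    thus ?thesis unfolding t_def qq_mult_nat by simp
  qed
  define h where "h = (\<lambda>k::int. crank_coeff p l (int p * k + int m - s_p p) * qpow (real_of_int k) z)"
  define B where "B = {k::int. 0 \<le> int p * k + int m - int s}"
  define A where "A = {n::nat. p dvd (n + s + (p - m))}"
  define \<phi> where "\<phi> = (\<lambda>k::int. nat (int p * k + int m - int s))"
  define \<psi> where "\<psi> = (\<lambda>n::nat. (int n + int s - int m) div int p)"
  have sf: "summable (\<lambda>n. norm (f n))" unfolding f_def by (rule f_summable[OF nz tn])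
  hence sf': "summable f" by (rule summable_norm_cancel)
  have h1: "(f has_sum suminf f) UNIV"
    by (rule norm_summable_imp_has_sum[OF sf summable_sums[OF sf']])
  have h2: "(f has_sum suminf f) A"
  proof -
    have "(f has_sum suminf f) A \<longleftrightarrow> (f has_sum suminf f) UNIV"
      by (rule has_sum_cong_neutral) (auto simp: A_def f_def)
    thus ?thesis using h1 by simp
  qed
  have kpos: "k \<ge> 0" if "k \<in> B" for k
  proof -
    have "0 \<le> int p * k + int m - int s" using that by (simp add: B_def)
    hence "0 < int p * (k + 1)" using m by (simp add: algebra_simps)
    hence "0 < k + 1" using p by (simp add: zero_less_mult_iff)
    thus ?thesis by simp
  qed
  have phi_int: "int (\<phi> k) = int p * k + int m - int s" if "k \<in> B" for k
    using that by (simp add: B_def \<phi>_def)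
  have phi_ns: "\<phi> k + s = p * nat k + m" if "k \<in> B" for k
  proof -
    have "int (\<phi> k + s) = int (p * nat k + m)" using phi_int[OF that] kpos[OF that] by simp
    thus ?thesis by (simp only: of_nat_eq_iff)
  qed
  have bij: "bij_betw \<phi> B A"
  proof (rule bij_betw_byWitness[where f' = \<psi>])
    show "\<forall>k\<in>B. \<psi> (\<phi> k) = k"
    proof
      fix k assume k: "k \<in> B"
      have "int (\<phi> k) + int s - int m = int p * k" using phi_int[OF k] by simp
      thus "\<psi> (\<phi> k) = k" unfolding \<psi>_def using p by simp
    qed
    show "\<forall>n\<in>A. \<phi> (\<psi> n) = n"
    proof
      fix n assume n: "n \<in> A"
      hence "p dvd (n + s + (p - m))" by (simp add: A_def)
      hence "int p dvd int (n + s + (p - m))" by (simp only: int_dvd_int_iff)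
      also have "int (n + s + (p - m)) = (int n + int s - int m) + int p" using m by simp
      finally have "int p dvd (int n + int s - int m)" by (simp add: dvd_add_left_iff)
      hence "int p * ((int n + int s - int m) div int p) = int n + int s - int m" by simp
      thus "\<phi> (\<psi> n) = n" unfolding \<phi>_def \<psi>_def by simp
    qed
    show "\<phi> ` B \<subseteq> A"
    proof
      fix n assume "n \<in> \<phi> ` B"
      then obtain k where k: "k \<in> B" "n = \<phi> k" by blast
      have "n + s + (p - m) = p * (nat k + 1)" using phi_ns[OF k(1)] k(2) m by simp
      thus "n \<in> A" by (simp add: A_def)
    qed
    show "\<psi> ` A \<subseteq> B"
    proof
      fix k assume "k \<in> \<psi> ` A"
      then obtain n where n: "n \<in> A" "k = \<psi> n" by blast
      hence "p dvd (n + s + (p - m))" by (simp add: A_def)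
      hence "int p dvd int (n + s + (p - m))" by (simp only: int_dvd_int_iff)
      also have "int (n + s + (p - m)) = (int n + int s - int m) + int p" using m by simp
      finally have "int p dvd (int n + int s - int m)" by (simp add: dvd_add_left_iff)
      hence "int p * ((int n + int s - int m) div int p) = int n + int s - int m" by simp
      hence "int p * k + int m - int s = int n" using n(2) by (simp add: \<psi>_def)
      thus "k \<in> B" by (simp add: B_def)
    qed
  qed
  have h3: "((\<lambda>k. f (\<phi> k)) has_sum suminf f) B"
    using h2 has_sum_reindex_bij_betw[OF bij, of f "suminf f"] by simp
  have fphi: "f (\<phi> k) = t ^ m * h k" if k: "k \<in> B" for k
  proof -
    have k0: "k \<ge> 0" by (rule kpos[OF k])
    have dv: "p dvd (\<phi> k + s + (p - m))"
    proof -
      have "\<phi> k + s + (p - m) = p * (nat k + 1)" using phi_ns[OF k] m by simp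
      thus ?thesis by simp
    qed
    have cc: "crank_coeff p l (int p * k + int m - s_p p) = ccoef \<zeta> (\<phi> k)"
      unfolding sp phi_int[OF k, symmetric] \<zeta>_def by (rule crank_coeff_nat)
    have qk: "qpow (real_of_int k) z = t ^ (p * nat k)"
    proof -
      have "qpow (real_of_int k) z = exp (of_nat (nat k) * (2 * pi * \<i> * z))"
        unfolding qpow_def using k0 by (simp add: mult_ac)
      also have "\<dots> = qq z ^ nat k" unfolding qq_def by (rule exp_of_nat_mult)
      also have "\<dots> = t ^ (p * nat k)" by (simp add: tp power_mult)
      finally show ?thesis .
    qed
    have "t ^ m * h k = ccoef \<zeta> (\<phi> k) * (t ^ m * t ^ (p * nat k))"
      unfolding h_def cc qk by (simp add: mult_ac)
    also have "t ^ m * t ^ (p * nat k) = t ^ (\<phi> k + s)"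
      unfolding phi_ns[OF k] by (simp add: power_add mult.commute)
    finally show ?thesis unfolding f_def using dv by simp
  qed
  have h4: "((\<lambda>k. t ^ m * h k) has_sum suminf f) B"
  proof -
    have "((\<lambda>k. f (\<phi> k)) has_sum suminf f) B \<longleftrightarrow> ((\<lambda>k. t ^ m * h k) has_sum suminf f) B"
      by (rule has_sum_cong) (rule fphi)
    thus ?thesis using h3 by simp
  qed
  have hz: "h k = 0" if "k \<notin> B" for k
  proof -
    have "int p * k + int m - s_p p < 0" using that by (simp add: B_def sp)
    thus ?thesis unfolding h_def crank_coeff_def by simp
  qed
  have h5: "((\<lambda>k. t ^ m * h k) has_sum suminf f) UNIV"
  proof -
    have "((\<lambda>k. t ^ m * h k) has_sum suminf f) B \<longleftrightarrow> ((\<lambda>k. t ^ m * h k) has_sum suminf f) UNIV"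
      by (rule has_sum_cong_neutral) (auto simp: hz)
    thus ?thesis using h4 by simp
  qed
  have tm0: "t ^ m \<noteq> 0" using t0 by simp
  have h6: "(h has_sum (suminf f / t ^ m)) UNIV"
    using h5 has_sum_cmult_right_iff[OF tm0, where f = h and S = "suminf f" and A = UNIV] by simp
  have inf: "infsum h UNIV = suminf f / t ^ m" by (rule infsumI[OF h6])
  have qm: "qpow (real m / real p) z = t ^ m"
  proof -
    have "qpow (real m / real p) z = exp (of_nat m * (2 * pi * \<i> * (z / of_nat p)))"
      unfolding qpow_def by (simp add: field_simps)
    also have "\<dots> = t ^ m" unfolding t_def qq_def by (rule exp_of_nat_mult)
    finally show ?thesis .
  qed
  have pr: "(\<Prod>n. (1 - qq z ^ (p * (n + 1)))) = qpoch (1 * qq z ^ p) (qq z ^ p)"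
    unfolding qpoch_def
  proof (rule prodinf_cong)
    fix n
    have "1 * qq z ^ p * (qq z ^ p) ^ n = (qq z ^ p) ^ (Suc n)" by simp
    also have "\<dots> = qq z ^ (p * Suc n)" by (rule power_mult[symmetric])
    finally show "1 - qq z ^ (p * (n + 1)) = 1 - 1 * qq z ^ p * (qq z ^ p) ^ n" by simp
  qed
  have "KC p m l z = t ^ m * qpoch (1 * qq z ^ p) (qq z ^ p) * (suminf f / t ^ m)"
    unfolding KC_def qm pr h_def[symmetric] inf ..
  also have "\<dots> = qpoch (1 * qq z ^ p) (qq z ^ p) * suminf f" using tm0 t0 by (simp add: field_simps)
  finally show ?thesis .
qed



theorem proposition2p5:
  fixes p m l :: nat and z :: complex
  assumes "prime p" and "p > 3"
    and "m \<le> p - 1" and "1 \<le> l" and "l \<le> p - 1"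
    and "Im z > 0"
  shows "KC p m l z =
    (1 - zeta p ^ l) *
      Uop p m (\<lambda>w. eta (of_nat (p ^ 2) * w) / eta w * F1 p l w) z"
proof -
  have p: "p > 0" using assms(2) by simp
  have m: "m < p" using assms(3) p by linarith
  have l: "0 < l" "l < p" using assms(4,5) p by linarith+
  have z: "Im z > 0" by (rule assms(6))
  define s where "s = p^2 div 24"
  have s: "p^2 = 24 * s + 1"
    using p2_mod24[OF assms(1,2)] unfolding s_def by (metis div_mult_mod_eq mult.commute)
  have sp: "s_p p = int s"
  proof -
    have "int p ^ 2 - 1 = 24 * int s" using arg_cong[OF s, of int] by simp
    thus ?thesis unfolding s_p_def by simp
  qed
  define t where "t = qq (z / of_nat p)"
  define \<zeta> where "\<zeta> = zeta p ^ l"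
  define F where "F = (\<lambda>w. eta (of_nat (p ^ 2) * w) / eta w * F1 p l w)"
  define PP where "PP = qpoch (1 * qq z ^ p) (qq z ^ p)"
  define f where "f = (\<lambda>n. ccoef \<zeta> n * t ^ (n + s) * (if p dvd (n + s + (p - m)) then 1 else 0))"
  have nz: "norm \<zeta> = 1" unfolding \<zeta>_def by (simp add: norm_power norm_zeta)
  have tn: "norm t < 1" unfolding t_def by (rule qq_norm) (use z p in simp)
  have tp: "t ^ p = qq z"
  proof -
    have "qq z = qq (of_nat p * (z / of_nat p))" using p by simp
    thus ?thesis unfolding t_def qq_mult_nat by simp
  qed
  have hyp: "(1 - \<zeta>) * F ((z + of_nat r) / of_nat p) =
              (t * zeta p ^ r) ^ s * PP * crank_gf \<zeta> (t * zeta p ^ r)" if r: "r < p" for r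
  proof -
    define w where "w = (z + of_nat r) / of_nat p"
    have w: "Im w > 0" unfolding w_def using z p by simp
    have qw: "qq w = t * zeta p ^ r" unfolding w_def t_def by (rule qq_shift[OF p])
    have om: "(zeta p ^ r) ^ (p^2) = 1"
    proof -
      have "(zeta p ^ r) ^ (p^2) = (zeta p ^ p) ^ (r * p)"
        by (simp add: power_mult[symmetric] power2_eq_square mult_ac)
      thus ?thesis by (simp add: zeta_pow_p[OF p])
    qed
    have qw2: "qq w ^ (p^2) = qq z ^ p"
    proof -
      have "qq w ^ (p^2) = t ^ (p^2) * (zeta p ^ r) ^ (p^2)" unfolding qw by (rule power_mult_distrib)
      also have "\<dots> = (t ^ p) ^ p" unfolding om by (simp add: power_mult[symmetric] power2_eq_square)
      finally show ?thesis unfolding tp .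
    qed
    have "(1 - \<zeta>) * F w = qq w ^ s * qpoch (1 * qq w ^ (p^2)) (qq w ^ (p^2)) * crank_gf \<zeta> (qq w)"
      unfolding F_def \<zeta>_def by (rule lemA[OF p l w s])
    hence e: "(1 - \<zeta>) * F w = qq w ^ s * PP * crank_gf \<zeta> (qq w)" by (simp only: qw2 PP_def)
    have "(1 - \<zeta>) * F w = (t * zeta p ^ r) ^ s * PP * crank_gf \<zeta> (t * zeta p ^ r)"
      using e unfolding qw .
    thus ?thesis unfolding w_def .
  qed
  have U: "(\<lambda>n. PP * f n) sums ((1 - \<zeta>) * Uop p m F z)"
    unfolding f_def t_def by (rule U_sums[OF p less_imp_le[OF m] z nz]) (rule hyp[unfolded t_def])
  have sf: "summable (\<lambda>n. norm (f n))" unfolding f_def by (rule f_summable[OF nz tn])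
  hence "summable f" by (rule summable_norm_cancel)
  hence "(\<lambda>n. PP * f n) sums (PP * suminf f)" by (intro sums_mult summable_sums)
  hence eq: "(1 - \<zeta>) * Uop p m F z = PP * suminf f" using U by (rule sums_unique2[rotated])
  have "KC p m l z = PP * suminf f"
    unfolding PP_def f_def t_def \<zeta>_def by (rule KC_side[OF p m z sp])
  also have "\<dots> = (1 - \<zeta>) * Uop p m F z" by (rule eq[symmetric])
  finally show ?thesis unfolding \<zeta>_def F_def .
qed

end
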